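(* Let $\mathcal{R}=\mathbb{C}[\xi_0,\xi_1,\xi_2,\xi_3]$. The sequence of $\mathcal{R}$-modules $\mathcal{R}^3\xleftarrow{D_0(\xi)^t}\mathcal{R}^4\xleftarrow{D_1(\xi)^t}\mathcal{R}^1$ is exact, i.e. $\ker D_0(\xi)^t=\operatorname{Im}D_1(\xi)^t$ in $\mathcal{R}^4$.
   Context: The polynomial matrices are $D_0(\xi)^t=\frac1i\begin{pmatrix}-(\xi_2+i\xi_3)&\xi_0-i\xi_1&0&0\\-(\xi_0+i\xi_1)&-(\xi_2-i\xi_3)&-(\xi_2+i\xi_3)&\xi_0-i\xi_1\\0&0&-(\xi_0+i\xi_1)&-(\xi_2-i\xi_3)\end{pmatrix}$, $D_1(\xi)^t=\frac1i\begin{pmatrix}-\xi_0+i\xi_1\\-\xi_2-i\xi_3\\\xi_2-i\xi_3\\-\xi_0-i\xi_1\end{pmatrix}$, acting on column vectors of polynomials by matrix multiplication (these are the transposed symbols of the 2-Cauchy–Fueter operators, $\partial_{x_j}\mapsto\frac1i\xi_j$). *)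

theory Defs
  imports Complex_Main "HOL-Computational_Algebra.Polynomial"
begin

text \<open>The polynomial ring C[xi0,xi1,xi2,xi3], realised as iterated univariate
  polynomials: xi0 is the outermost variable, xi3 the innermost.\<close>

type_synonym R = "complex poly poly poly poly"

definition cst :: "complex \<Rightarrow> R" where
  "cst c = [:[:[:[:c:]:]:]:]"

definition xi0 :: R where "xi0 = [:0, 1:]"
definition xi1 :: R where "xi1 = [:[:0, 1:]:]"
definition xi2 :: R where "xi2 = [:[:[:0, 1:]:]:]"
definition xi3 :: R where "xi3 = [:[:[:[:0, 1:]:]:]:]"

definition D0t :: "R \<times> R \<times> R \<times> R \<Rightarrow> R \<times> R \<times> R" where
  "D0t v = (case v of (a, b, c, d) \<Rightarrow>
     (cst (1 / \<i>) * ( (- (xi2 + cst \<i> * xi3)) * a + (xi0 - cst \<i> * xi1) * b + 0 * c + 0 * d),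
      cst (1 / \<i>) * ( (- (xi0 + cst \<i> * xi1)) * a + (- (xi2 - cst \<i> * xi3)) * b
                       + (- (xi2 + cst \<i> * xi3)) * c + (xi0 - cst \<i> * xi1) * d),
      cst (1 / \<i>) * ( 0 * a + 0 * b + (- (xi0 + cst \<i> * xi1)) * c + (- (xi2 - cst \<i> * xi3)) * d)))"

definition D1t :: "R \<Rightarrow> R \<times> R \<times> R \<times> R" where
  "D1t p = (cst (1 / \<i>) * ((- xi0 + cst \<i> * xi1) * p),
            cst (1 / \<i>) * ((- xi2 - cst \<i> * xi3) * p),
            cst (1 / \<i>) * ((xi2 - cst \<i> * xi3) * p),
            cst (1 / \<i>) * ((- xi0 - cst \<i> * xi1) * p))"

end

theory Submission imports Defs begin
type_synonym S = "complex poly poly poly"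
definition K :: "complex \<Rightarrow> S" where "K c = [:[:[:c:]:]:]"
definition X1 :: S where "X1 = [:0,1:]"
definition X2 :: S where "X2 = [:[:0,1:]:]"
definition X3 :: S where "X3 = [:[:[:0,1:]:]:]"
lemma cstK: "cst c = [:K c:]" by (simp add: cst_def K_def)
lemma xi1: "xi1 = [:X1:]" by (simp add: xi1_def X1_def)
lemma xi2: "xi2 = [:X2:]" by (simp add: xi2_def X2_def)
lemma xi3: "xi3 = [:X3:]" by (simp add: xi3_def X3_def)
lemma u_eq: "xi0 - cst \<i> * xi1 = [:- (K \<i> * X1), 1:]"
  by (simp add: xi0_def cstK xi1)
lemma ub_eq: "xi0 + cst \<i> * xi1 = [:- (- (K \<i> * X1)), 1:]"
  by (simp add: xi0_def cstK xi1)
lemma w_eq: "xi2 + cst \<i> * xi3 = [:X2 + K \<i> * X3:]"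
  by (simp add: xi2 xi3 cstK)
lemma wb_eq: "xi2 - cst \<i> * xi3 = [:X2 - K \<i> * X3:]"
  by (simp add: xi2 xi3 cstK)
lemma W_nz: "X2 + K \<i> * X3 \<noteq> 0"
proof
  assume "X2 + K \<i> * X3 = 0"
  hence "coeff (coeff (coeff (X2 + K \<i> * X3) 0) 1) 0 = 0" by simp
  thus False by (simp add: X2_def X3_def K_def)
qed
lemma Wb_nz: "X2 - K \<i> * X3 \<noteq> 0"
proof
  assume "X2 - K \<i> * X3 = 0"
  hence "coeff (coeff (coeff (X2 - K \<i> * X3) 0) 1) 0 = 0" by simp
  thus False by (simp add: X2_def X3_def K_def)
qed
lemma cst_mult: "cst a * cst b = cst (a*b)" by (simp add: cst_def)
lemma cst_nz: "c \<noteq> 0 \<Longrightarrow> cst c \<noteq> 0" by (simp add: cst_def)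
lemma cst_m1: "cst (-1) = -1"
proof -
  have "cst (-1) = - cst 1" by (simp add: cst_def)
  also have "cst 1 = 1" by (simp add: cst_def one_pCons)
  finally show ?thesis .
qed

lemma main:
  fixes u ub w wb k a b c d :: R and z :: S and W Wb :: S
  assumes u: "u = [:-z,1:]" and ub: "ub = [:-(-z),1:]" and w: "w = [:W:]" and wb: "wb = [:Wb:]"
    and W: "W \<noteq> 0" and Wb: "Wb \<noteq> 0"
    and e1: "-w*a + u*b = 0" and e2: "-ub*a - wb*b - w*c + u*d = 0" and e3: "-ub*c - wb*d = 0"
  shows "\<exists>p. a = u*p \<and> b = w*p \<and> c = -wb*p \<and> d = ub*p"
proof -
  have unz: "u \<noteq> 0" using u by auto
  have ubnz: "ub \<noteq> 0" using ub by auto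
  have "u*b = w*a" using e1 by (simp add: algebra_simps)
  hence "poly (w*a) z = poly (u*b) z" by simp
  hence "W * poly a z = 0" using u w by simp
  hence "poly a z = 0" using W by simp
  then obtain p where ap: "a = u*p" using u by (metis dvdE poly_eq_0_iff_dvd)
  have "u*b = w*a" using e1 by (simp add: algebra_simps)
  hence "u*b = u*(w*p)" using ap by (simp add: algebra_simps)
  hence bp: "b = w*p" using unz by simp
  have e3': "ub*c = -(wb*d)"
  proof -
    have "ub*c = -(-ub*c - wb*d) - wb*d" by (simp add: algebra_simps)
    also have "\<dots> = -(wb*d)" unfolding e3 by simp
    finally show ?thesis .
  qed
  hence "poly (ub*c) (-z) = poly (-(wb*d)) (-z)" by simp
  hence "- (Wb * poly d (-z)) = 0" using ub wb by simp
  hence "poly d (-z) = 0" using Wb by simp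
  then obtain q where dq: "d = ub*q" using ub by (metis dvdE poly_eq_0_iff_dvd)
  have "ub*c = ub*(-wb*q)" using e3'  using dq by (simp add: algebra_simps)
  hence cq: "c = -wb*q" using ubnz by (metis mult_left_cancel)
  have "(u*ub + w*wb)*(q - p) = -ub*(u*p) - wb*(w*p) - w*(-wb*q) + u*(ub*q)" by (simp add: algebra_simps)
  also have "\<dots> = 0" using e2 ap bp cq dq by simp
  finally have "(u*ub + w*wb)*(q - p) = 0" .
  moreover have "u*ub + w*wb \<noteq> 0"
  proof
    assume "u*ub + w*wb = 0"
    hence "poly (u*ub + w*wb) z = 0" by simp
    hence "W*Wb = 0" using u ub w wb by auto
    thus False using W Wb by simp
  qed
  ultimately have "q = p" by simp
  thus ?thesis using ap bp cq dq by auto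
qed

theorem proposition3p3:
  shows "{v. D0t v = (0, 0, 0)} = range D1t"
proof -
  define u where "u = xi0 - cst \<i> * xi1"
  define ub where "ub = xi0 + cst \<i> * xi1"
  define w where "w = xi2 + cst \<i> * xi3"
  define wb where "wb = xi2 - cst \<i> * xi3"
  define k where "k = cst (1/\<i>)"
  have knz: "k \<noteq> 0" unfolding k_def by (rule cst_nz) simp
  have D0: "D0t (a,b,c,d) = (k*(-w*a + u*b), k*(-ub*a - wb*b - w*c + u*d), k*(-ub*c - wb*d))" for a b c d
    unfolding D0t_def u_def ub_def w_def wb_def k_def by (simp add: algebra_simps)
  have D1: "D1t r = (k*(-u*r), k*(-w*r), k*(wb*r), k*(-ub*r))" for r
    unfolding D1t_def u_def ub_def w_def wb_def k_def by (simp add: algebra_simps)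
  have kk: "k * cst (-\<i>) = -1" unfolding k_def by (simp add: cst_mult cst_m1)
  show ?thesis
  proof (intro set_eqI iffI)
    fix v assume "v \<in> {v. D0t v = (0, 0, 0)}"
    then obtain a b c d where v: "v = (a,b,c,d)" and "D0t (a,b,c,d) = (0,0,0)" by (cases v) auto
    hence e: "-w*a + u*b = 0" "-ub*a - wb*b - w*c + u*d = 0" "-ub*c - wb*d = 0"
      using knz by (auto simp: D0)
    obtain p where p: "a = u*p" "b = w*p" "c = -wb*p" "d = ub*p"
      using main[OF u_def[unfolded u_eq] ub_def[unfolded ub_eq] w_def[unfolded w_eq] wb_def[unfolded wb_eq] W_nz Wb_nz e]
      by blast
    have "D1t (cst (-\<i>) * p) = v"
    proof -
      have "k*(x*(cst (-\<i>) * p)) = - (x*p)" for x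
        by (metis (no_types, lifting) kk mult.left_commute mult.assoc mult_minus1)
      thus ?thesis using v p by (simp add: D1)
    qed
    thus "v \<in> range D1t" by (metis rangeI)
  next
    fix v assume "v \<in> range D1t"
    then obtain r where "v = D1t r" by auto
    thus "v \<in> {v. D0t v = (0, 0, 0)}" by (simp add: D1 D0 algebra_simps)
  qed
qed
end
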